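(* Let $\mathcal{P}=((v_1,\dots,v_p),(v'_0,\dots,v'_{p+1}))$ be a dangerous caterpillar structure for an assignment $(x,y)$. Let $i$ be an index with $v_i\in\Gamma(\mathcal{P})$ and $L(v_i)=\min_{v\in\Gamma(\mathcal{P})}L(v)$, and let $j\in\{0,\dots,p+1\}$ be an index with $v'_j\ne\mathrm{nil}$ and $L(v'_j)>L(v_i)$. Then for every $a$ with $1\le a\le p$ and $\min(i,j)\le a\le\max(i,j)$ we have $L(v_a)\ge L(v_i)$.
   Context: $G=(V,E)$ undirected unweighted, $\mathrm{dist}_G$ shortest-path distance, $L:V\to\mathbb{N}$. An assignment is $x:V\times V\to\mathbb{R}_{\ge0}$, $y:V\to\mathbb{R}_{\ge0}$. A $\delta$-caterpillar structure for $(x,y)$ is a sequence of distinct vertices $P=(v_1,\dots,v_p)$ with a sequence $P'=(v'_0,\dots,v'_{p+1})$ such that: (i) $y_{v_i}=1$ for $i=1..p$; (ii) $\mathrm{dist}_G(v_i,v_{i+1})\le\delta$ for $i=1..p-1$; (iii) each $v'_i$ is $\mathrm{nil}$ or a vertex not in $\{v_1,\dots,v_p\}$; (iv) for $1\le i\le p$, if $v'_i\ne\mathrm{nil}$ then $L(v_i)\ge L(v'_i)$, $0<y_{v'_i}<1$, $\mathrm{dist}_G(v_i,v'_i)\le\delta$; (v) if $v'_0\ne\mathrm{nil}$ then $\mathrm{dist}_G(v'_0,v_1)\le\delta$ and $0<y_{v'_0}<1$; (vi) if $v'_{p+1}\ne\mathrm{nil}$ then $\mathrm{dist}_G(v'_{p+1},v_p)\le\delta$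 and $0<y_{v'_{p+1}}<1$; (vii) non-nil entries of $P'$ are pairwise distinct; (viii) $\sum_{v\in V(P')}y_v$ is an integer, where $V(P')$ is the set of non-nil entries. For such $\mathcal{P}$, $\Gamma(\mathcal{P})$ is the set of $v_i$ ($1\le i\le p$) for which there exist $0\le i_0<i<i_1\le p+1$ with $v'_{i_0}\ne\mathrm{nil}$, $L(v'_{i_0})>L(v_i)$, $v'_{i_1}\ne\mathrm{nil}$, $L(v'_{i_1})>L(v_i)$. $\mathcal{P}$ is safe if $\Gamma(\mathcal{P})=\emptyset$ and dangerous otherwise. *)

theory Defs
  imports Main "HOL-Library.Extended_Nat"
begin

definition graph :: "'v set \<Rightarrow> ('v \<times> 'v) set \<Rightarrow> bool" where
  "graph V E \<longleftrightarrow> finite V \<and> E \<subseteq> V \<times> V \<and> sym E \<and> irrefl E"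

definition walk :: "'v set \<Rightarrow> ('v \<times> 'v) set \<Rightarrow> 'v list \<Rightarrow> bool" where
  "walk V E ws \<longleftrightarrow> ws \<noteq> [] \<and> set ws \<subseteq> V \<and>
     (\<forall>k. Suc k < length ws \<longrightarrow> (ws ! k, ws ! Suc k) \<in> E)"

text \<open>Shortest-path distance (infinite if no path).\<close>
definition dist :: "'v set \<Rightarrow> ('v \<times> 'v) set \<Rightarrow> 'v \<Rightarrow> 'v \<Rightarrow> enat" where
  "dist V E u v = (INF ws \<in> {ws. walk V E ws \<and> hd ws = u \<and> last ws = v}. enat (length ws - 1))"

definition assignment :: "'v set \<Rightarrow> ('v \<Rightarrow> 'v \<Rightarrow> real) \<Rightarrow> ('v \<Rightarrow> real) \<Rightarrow> bool" where
  "assignment V x y \<longleftrightarrow> (\<forall>u\<in>V. \<forall>v\<in>V. x u v \<ge> 0) \<and> (\<forall>v\<in>V. y v \<ge> 0)"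

text \<open>Caterpillar: P i = v_i for i = 1..p, P' i = v'_i for i = 0..p+1 (None = nil).\<close>
definition VP' :: "nat \<Rightarrow> (nat \<Rightarrow> 'v option) \<Rightarrow> 'v set" where
  "VP' p P' = {v. \<exists>i\<in>{0..p+1}. P' i = Some v}"

definition caterpillar ::
  "'v set \<Rightarrow> ('v \<times> 'v) set \<Rightarrow> ('v \<Rightarrow> nat) \<Rightarrow> nat \<Rightarrow> ('v \<Rightarrow> 'v \<Rightarrow> real) \<Rightarrow> ('v \<Rightarrow> real)
   \<Rightarrow> nat \<Rightarrow> (nat \<Rightarrow> 'v) \<Rightarrow> (nat \<Rightarrow> 'v option) \<Rightarrow> bool" where
  "caterpillar V E L \<delta> x y p P P' \<longleftrightarrow>
     P ` {1..p} \<subseteq> V \<and> inj_on P {1..p} \<and>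
     (\<forall>i\<in>{1..p}. y (P i) = 1) \<and>
     (\<forall>i\<in>{1..<p}. dist V E (P i) (P (Suc i)) \<le> enat \<delta>) \<and>
     (\<forall>i\<in>{0..p+1}. \<forall>w. P' i = Some w \<longrightarrow> w \<in> V \<and> w \<notin> P ` {1..p}) \<and>
     (\<forall>i\<in>{1..p}. \<forall>w. P' i = Some w \<longrightarrow>
         L (P i) \<ge> L w \<and> 0 < y w \<and> y w < 1 \<and> dist V E (P i) w \<le> enat \<delta>) \<and>
     (\<forall>w. P' 0 = Some w \<longrightarrow> dist V E w (P 1) \<le> enat \<delta> \<and> 0 < y w \<and> y w < 1) \<and>
     (\<forall>w. P' (p+1) = Some w \<longrightarrow> dist V E w (P p) \<le> enat \<delta> \<and> 0 < y w \<and> y w < 1) \<and>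
     (\<forall>i\<in>{0..p+1}. \<forall>k\<in>{0..p+1}. i \<noteq> k \<longrightarrow> P' i \<noteq> None \<longrightarrow> P' i \<noteq> P' k) \<and>
     (\<Sum>v\<in>VP' p P'. y v) \<in> \<int>"

definition Gamma :: "('v \<Rightarrow> nat) \<Rightarrow> nat \<Rightarrow> (nat \<Rightarrow> 'v) \<Rightarrow> (nat \<Rightarrow> 'v option) \<Rightarrow> 'v set" where
  "Gamma L p P P' = {P i | i. i \<in> {1..p} \<and>
     (\<exists>i0 i1 w0 w1. i0 < i \<and> i < i1 \<and> i1 \<le> p+1 \<and>
        P' i0 = Some w0 \<and> L w0 > L (P i) \<and> P' i1 = Some w1 \<and> L w1 > L (P i))}"

definition dangerous :: "('v \<Rightarrow> nat) \<Rightarrow> nat \<Rightarrow> (nat \<Rightarrow> 'v) \<Rightarrow> (nat \<Rightarrow> 'v option) \<Rightarrow> bool" where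
  "dangerous L p P P' \<longleftrightarrow> Gamma L p P P' \<noteq> {}"

end

theory Submission
  imports Defs
begin

theorem mainTheorem13:
  fixes V :: "'v set" and E :: "('v \<times> 'v) set" and L :: "'v \<Rightarrow> nat" and \<delta> :: nat
    and x :: "'v \<Rightarrow> 'v \<Rightarrow> real" and y :: "'v \<Rightarrow> real"
    and p :: nat and P :: "nat \<Rightarrow> 'v" and P' :: "nat \<Rightarrow> 'v option"
    and i j a :: nat and w :: 'v
  assumes "graph V E"
    and "assignment V x y"
    and "caterpillar V E L \<delta> x y p P P'"
    and "dangerous L p P P'"
    and "i \<in> {1..p}" and "P i \<in> Gamma L p P P'"
    and "L (P i) = Min (L ` Gamma L p P P')"
    and "j \<le> p + 1" and "P' j = Some w" and "L w > L (P i)"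
    and "1 \<le> a" and "a \<le> p" and "min i j \<le> a" and "a \<le> max i j"
  shows "L (P a) \<ge> L (P i)"
proof (rule ccontr)
  assume neg: "\<not> L (P a) \<ge> L (P i)"
  have inj: "inj_on P {1..p}" and iv: "\<forall>k\<in>{1..p}. \<forall>u. P' k = Some u \<longrightarrow> L (P k) \<ge> L u"
    using assms(3) unfolding caterpillar_def by auto
  have fin: "finite (Gamma L p P P')"
  proof -
    have "Gamma L p P P' \<subseteq> P ` {1..p}" unfolding Gamma_def by auto
    thus ?thesis by (rule finite_subset) simp
  qed
  obtain i' i0 i1 w0 w1 where "P i = P i'" "i' \<in> {1..p}" "i0 < i'" "i' < i1" "i1 \<le> p+1"
    "P' i0 = Some w0" "L w0 > L (P i')" "P' i1 = Some w1" "L w1 > L (P i')"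
    using assms(6) unfolding Gamma_def by blast
  then have ii: "i' = i" using inj assms(5) by (metis inj_onD)
  have "a \<noteq> j"
  proof
    assume "a = j"
    then have "L (P a) \<ge> L w" using iv assms(9,11,12) by auto
    thus False using neg assms(10) by simp
  qed
  moreover have "a \<noteq> i" using neg by auto
  ultimately have "P a \<in> Gamma L p P P'"
  proof (cases "j < i")
    case True
    then have "j < a" "a < i" using assms(13,14) \<open>a \<noteq> j\<close> \<open>a \<noteq> i\<close> by auto
    have "j < a \<and> a < i1 \<and> i1 \<le> p+1 \<and> P' j = Some w \<and> L w > L (P a) \<and> P' i1 = Some w1 \<and> L w1 > L (P a)"
      using True assms(9,10) neg \<open>a < i\<close> \<open>j < a\<close> \<open>i' < i1\<close> \<open>i1 \<le> p+1\<close>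
      \<open>P' i1 = Some w1\<close> \<open>L w1 > L (P i')\<close> ii by auto
    hence "a \<in> {1..p} \<and> (\<exists>i0 i1 w0 w1. i0 < a \<and> a < i1 \<and> i1 \<le> p+1 \<and>
        P' i0 = Some w0 \<and> L w0 > L (P a) \<and> P' i1 = Some w1 \<and> L w1 > L (P a))"
      using assms(11,12) by (intro conjI) (simp, blast)
    thus ?thesis unfolding Gamma_def by (intro CollectI exI[of _ a]) simp
  next
    case False
    then have "i < a" "a < j" using assms(13,14) \<open>a \<noteq> j\<close> \<open>a \<noteq> i\<close> by auto
    have "i0 < a \<and> a < j \<and> j \<le> p+1 \<and> P' i0 = Some w0 \<and> L w0 > L (P a) \<and> P' j = Some w \<and> L w > L (P a)"
      using assms(8,9,10) neg \<open>a > i\<close> \<open>a < j\<close> \<open>i0 < i'\<close>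
      \<open>P' i0 = Some w0\<close> \<open>L w0 > L (P i')\<close> ii by auto
    hence "a \<in> {1..p} \<and> (\<exists>i0 i1 w0 w1. i0 < a \<and> a < i1 \<and> i1 \<le> p+1 \<and>
        P' i0 = Some w0 \<and> L w0 > L (P a) \<and> P' i1 = Some w1 \<and> L w1 > L (P a))"
      using assms(11,12) by (intro conjI) (simp, blast)
    thus ?thesis unfolding Gamma_def by (intro CollectI exI[of _ a]) simp
  qed
  then have "L (P a) \<ge> Min (L ` Gamma L p P P')" using fin by simp
  thus False using neg assms(7) by simp
qed

end
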